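(* Let $\Delta$ be a finite saturated sample set, $\delta$ a $\Delta$-diagram, and $t$ a basic term. If the time warp $f$ strongly extends $D_t(\delta)$, then $f^\star$ strongly extends $D_{t'}(\delta)$.
   Context: Time warps: join-preserving maps $f\colon\omega^+\to\omega^+$, $\omega^+=\omega\cup\{\omega\}$, ordered pointwise; $p(m)=\bigvee\{k\in\omega\mid k<m\}$; $f^\star$ is the largest time warp $h$ with $f\circ h\le p$; $\mathrm{last}(f)=\min\{m\in\omega^+\mid f(m)=f(\omega)\}$. Basic terms are built from variables using $\cdot,{}',1$. Samples (formal expressions): $\alpha::=\kappa\mid t[\alpha]\mid \mathrm{suc}(\alpha)\mid\mathrm{last}(t)$ with $\kappa$ a time variable and $t$ a basic term. The relation $\leadsto$: $t[\alpha]\leadsto\alpha$, $\mathrm{suc}(\alpha)\leadsto\alpha$, $t[\alpha]\leadsto t[\mathrm{last}(t)]$, $(tu)[\alpha]\leadsto t[u[\alpha]]$, $t'[\alpha]\leadsto t[t'[\alpha]]$, $t'[\alpha]\leadsto t[\mathrm{suc}(t'[\alpha])]$; a sample set is saturated if closed under $\leadsto$. $S(n)=n+1$ for $n\in\omega$, $S(\omega)=\omega$. For saturated $\Delta$, a $\Delta$-diagram is $\delta\colon\Delta\to\omega^+$ such that, whenever the samples mentioned belong to $\Delta$: (1) $\delta(\alpha)\le\delta(\beta)\Rightarrow\delta(t[\alpha])\le\delta(t[\beta])$; (2) $\delta(\alpha)=0\Rightarrow\delta(t[\alpha])=0$; (3) $\delta(\mathrm{suc}(\alpha))=S(\delta(\alpha))$;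 (4) for $t[\alpha]\in\Delta$: $\delta(\mathrm{last}(t))\le\delta(\alpha)\iff\delta(t[\mathrm{last}(t)])=\delta(t[\alpha])$; (5) $\delta(\mathrm{last}(t))=\omega\Rightarrow\delta(t[\mathrm{last}(t)])=\omega$; (6) $\delta(1[\alpha])=\delta(\alpha)$; (7) $\delta(\mathrm{last}(1))=\omega$; (8) $\delta((tu)[\alpha])=\delta(t[u[\alpha]])$; (9) $\delta(\mathrm{last}(tu))=\omega\Rightarrow\delta(\mathrm{last}(t))=\delta(\mathrm{last}(u))=\omega$; (10) for $t'[\alpha]\in\Delta$: $0<\delta(\alpha)<\omega\Rightarrow\delta(t[t'[\alpha]])<\delta(\alpha)$; (11) for $t'[\alpha]\in\Delta$: $\delta(t'[\alpha])<\omega\Rightarrow\delta(\alpha)\le\delta(t[\mathrm{suc}(t'[\alpha])])$; (12) $\delta(\mathrm{last}(t'))=\omega\Rightarrow\delta(\mathrm{last}(t))=\omega$. For a basic term $t$, $D_t(\delta)=\{(\delta(\alpha),\delta(t[\alpha]))\mid t[\alpha]\in\Delta\}$. A time warp $f$ extends $D_t(\delta)$ if $f(i)=j$ for all $(i,j)\in D_t(\delta)$, and strongly extends it if moreover $D_t(\delta)\neq\emptyset$ and $\delta(\mathrm{last}(t))=\omega$ together imply $\mathrm{last}(f)=\omega$. *)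

theory Defs
  imports Main "HOL-Library.Extended_Nat"
begin

text \<open>omega^+ is rendered as enat, with omega = \<infinity>; the successor S is eSuc
  (eSuc \<infinity> = \<infinity>). Time warps are maps preserving all joins (including the
  empty join, so f 0 = 0).\<close>

definition time_warp :: "(enat \<Rightarrow> enat) \<Rightarrow> bool" where
  "time_warp f \<longleftrightarrow> (\<forall>A. f (Sup A) = Sup (f ` A))"

definition pred_tw :: "enat \<Rightarrow> enat" where
  "pred_tw m = Sup {enat k | k. enat k < m}"

definition tw_star :: "(enat \<Rightarrow> enat) \<Rightarrow> (enat \<Rightarrow> enat)" where
  "tw_star f = (GREATEST h. time_warp h \<and> (\<forall>x. f (h x) \<le> pred_tw x))"

definition tw_last :: "(enat \<Rightarrow> enat) \<Rightarrow> enat" where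
  "tw_last f = (LEAST m. f m = f \<infinity>)"

datatype 'v bterm = BVar 'v | BMult "'v bterm" "'v bterm" | BStar "'v bterm" | BOne

datatype ('v, 'k) sample =
    TVar 'k
  | App "'v bterm" "('v, 'k) sample"
  | SSuc "('v, 'k) sample"
  | SLast "'v bterm"

inductive leadsto :: "('v, 'k) sample \<Rightarrow> ('v, 'k) sample \<Rightarrow> bool" where
  l1: "leadsto (App t a) a"
| l2: "leadsto (SSuc a) a"
| l3: "leadsto (App t a) (App t (SLast t))"
| l4: "leadsto (App (BMult t u) a) (App t (App u a))"
| l5: "leadsto (App (BStar t) a) (App t (App (BStar t) a))"
| l6: "leadsto (App (BStar t) a) (App t (SSuc (App (BStar t) a)))"

definition saturated :: "('v, 'k) sample set \<Rightarrow> bool" where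
  "saturated D \<longleftrightarrow> (\<forall>a \<in> D. \<forall>b. leadsto a b \<longrightarrow> b \<in> D)"

definition diagram :: "('v, 'k) sample set \<Rightarrow> (('v, 'k) sample \<Rightarrow> enat) \<Rightarrow> bool" where
  "diagram D d \<longleftrightarrow>
    (\<forall>t a b. a \<in> D \<and> b \<in> D \<and> App t a \<in> D \<and> App t b \<in> D \<and> d a \<le> d b
        \<longrightarrow> d (App t a) \<le> d (App t b)) \<and>
    (\<forall>t a. a \<in> D \<and> App t a \<in> D \<and> d a = 0 \<longrightarrow> d (App t a) = 0) \<and>
    (\<forall>a. a \<in> D \<and> SSuc a \<in> D \<longrightarrow> d (SSuc a) = eSuc (d a)) \<and>
    (\<forall>t a. App t a \<in> D \<longrightarrow>
        (d (SLast t) \<le> d a \<longleftrightarrow> d (App t (SLast t)) = d (App t a))) \<and>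
    (\<forall>t. SLast t \<in> D \<and> App t (SLast t) \<in> D \<and> d (SLast t) = \<infinity>
        \<longrightarrow> d (App t (SLast t)) = \<infinity>) \<and>
    (\<forall>a. a \<in> D \<and> App BOne a \<in> D \<longrightarrow> d (App BOne a) = d a) \<and>
    (SLast BOne \<in> D \<longrightarrow> d (SLast BOne) = \<infinity>) \<and>
    (\<forall>t u a. App (BMult t u) a \<in> D \<and> App t (App u a) \<in> D
        \<longrightarrow> d (App (BMult t u) a) = d (App t (App u a))) \<and>
    (\<forall>t u. SLast (BMult t u) \<in> D \<and> SLast t \<in> D \<and> SLast u \<in> D \<and>
        d (SLast (BMult t u)) = \<infinity> \<longrightarrow> d (SLast t) = \<infinity> \<and> d (SLast u) = \<infinity>) \<and>
    (\<forall>t a. App (BStar t) a \<in> D \<and> 0 < d a \<and> d a < \<infinity>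
        \<longrightarrow> d (App t (App (BStar t) a)) < d a) \<and>
    (\<forall>t a. App (BStar t) a \<in> D \<and> d (App (BStar t) a) < \<infinity>
        \<longrightarrow> d a \<le> d (App t (SSuc (App (BStar t) a)))) \<and>
    (\<forall>t. SLast (BStar t) \<in> D \<and> SLast t \<in> D \<and> d (SLast (BStar t)) = \<infinity>
        \<longrightarrow> d (SLast t) = \<infinity>)"

definition Dt :: "('v, 'k) sample set \<Rightarrow> (('v, 'k) sample \<Rightarrow> enat) \<Rightarrow> 'v bterm \<Rightarrow> (enat \<times> enat) set" where
  "Dt D d t = {(d a, d (App t a)) | a. App t a \<in> D}"

definition extends_tw :: "(enat \<Rightarrow> enat) \<Rightarrow> (enat \<times> enat) set \<Rightarrow> bool" where
  "extends_tw f R \<longleftrightarrow> (\<forall>(i, j) \<in> R. f i = j)"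

definition strongly_extends ::
  "('v, 'k) sample set \<Rightarrow> (('v, 'k) sample \<Rightarrow> enat) \<Rightarrow> 'v bterm \<Rightarrow> (enat \<Rightarrow> enat) \<Rightarrow> bool" where
  "strongly_extends D d t f \<longleftrightarrow> extends_tw f (Dt D d t) \<and>
     (Dt D d t \<noteq> {} \<and> d (SLast t) = \<infinity> \<longrightarrow> tw_last f = \<infinity>)"

end

theory Submission
  imports Defs
begin


lemma tw_mono: assumes "time_warp f" "x \<le> y" shows "f x \<le> f y"
proof -
  have "f (Sup {x,y}) = Sup (f ` {x,y})" using assms(1) unfolding time_warp_def by blast
  moreover have "Sup {x,y} = y" using assms(2) by (simp add: sup_absorb2)
  ultimately show ?thesis by (metis Sup_insert ccSup_empty image_empty image_insert sup.cobounded1 sup_bot_right)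
qed

lemma tw_zero: assumes "time_warp f" shows "f 0 = 0"
proof -
  have "f (Sup {}) = Sup (f ` {})" using assms unfolding time_warp_def by blast
  thus ?thesis by (simp add: bot_enat_def)
qed

lemma Sup_range_enat: "Sup (range enat) = \<infinity>"
  proof - have "infinite (range enat)" using finite_imageD[of enat UNIV] by (auto simp: inj_on_def) thus ?thesis by (simp add: Sup_enat_def) qed

lemma tw_inf: assumes "time_warp f" shows "f \<infinity> = (SUP k. f (enat k))"
proof -
  have "f (Sup (range enat)) = Sup (f ` range enat)" using assms unfolding time_warp_def by blast
  thus ?thesis by (simp add: Sup_range_enat image_image)
qed

lemma pred_low: "enat k < x \<Longrightarrow> enat k \<le> pred_tw x"
  unfolding pred_tw_def by (rule Sup_upper) auto

lemma pred_Suc: "pred_tw (enat (Suc n)) = enat n"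
  unfolding pred_tw_def
  by (rule antisym, rule Sup_least) (auto intro: Sup_upper)

lemma pred_0: "pred_tw 0 = 0"
  unfolding pred_tw_def by (simp add: zero_enat_def[symmetric] bot_enat_def[symmetric])

definition TWS where "TWS f = {h. time_warp h \<and> (\<forall>x. f (h x) \<le> pred_tw x)}"

lemma Sup_TWS: assumes "time_warp f" shows "Sup (TWS f) \<in> TWS f"
proof -
  let ?g = "Sup (TWS f)"
  have "time_warp ?g" unfolding time_warp_def
  proof
    fix A :: "enat set"
    have "?g (Sup A) = (SUP h\<in>TWS f. h (Sup A))" by simp
    also have "\<dots> = (SUP h\<in>TWS f. SUP a\<in>A. h a)"
      by (rule SUP_cong) (auto simp: TWS_def time_warp_def)
    also have "\<dots> = (SUP a\<in>A. SUP h\<in>TWS f. h a)" by (rule SUP_commute)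
    also have "\<dots> = Sup (?g ` A)" by simp
    finally show "?g (Sup A) = Sup (?g ` A)" .
  qed
  moreover have "f (?g x) \<le> pred_tw x" for x
  proof -
    have "f (?g x) = f (Sup ((\<lambda>h. h x) ` TWS f))" by simp
    also have "\<dots> = Sup (f ` (\<lambda>h. h x) ` TWS f)" using assms unfolding time_warp_def by blast
    also have "\<dots> \<le> pred_tw x" by (rule Sup_least) (auto simp: TWS_def)
    finally show ?thesis .
  qed
  ultimately show ?thesis unfolding TWS_def by blast
qed

lemma star_eq: assumes "time_warp f" shows "tw_star f = Sup (TWS f)"
  unfolding tw_star_def
  apply (rule Greatest_equality)
  using Sup_TWS[OF assms] apply (simp add: TWS_def)
  by (simp add: Sup_upper TWS_def)

lemma star_tw: assumes "time_warp f" shows "time_warp (tw_star f)"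
  using Sup_TWS[OF assms] star_eq[OF assms] by (simp add: TWS_def)

lemma star_le: assumes "time_warp f" shows "f (tw_star f x) \<le> pred_tw x"
  using Sup_TWS[OF assms] star_eq[OF assms] by (simp add: TWS_def)

lemma star_max: assumes "time_warp f" "time_warp h" "\<forall>x. f (h x) \<le> pred_tw x"
  shows "h x \<le> tw_star f x"
proof -
  have "h \<in> TWS f" using assms by (simp add: TWS_def)
  hence "h \<le> Sup (TWS f)" by (rule Sup_upper)
  thus ?thesis using star_eq[OF assms(1)] by (simp add: le_fun_def)
qed

lemma step_tw: "time_warp (\<lambda>x. if enat n < x then m else 0)"
  unfolding time_warp_def
proof
  fix A :: "enat set"
  show "(if enat n < Sup A then m else 0) = Sup ((\<lambda>x. if enat n < x then m else 0) ` A)"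
  proof (cases "\<exists>a\<in>A. enat n < a")
    case True
    then obtain a where a: "a \<in> A" "enat n < a" by blast
    hence "enat n < Sup A" using Sup_upper less_le_trans by blast
    moreover have "Sup ((\<lambda>x. if enat n < x then m else 0) ` A) = m"
      apply (rule antisym)
       apply (rule Sup_least) apply auto[1]
      apply (rule Sup_upper2[of m]) using a by force auto
    ultimately show ?thesis by simp
  next
    case False
    hence "Sup A \<le> enat n" by (auto intro!: Sup_least simp: not_less)
    moreover have "Sup ((\<lambda>x. if enat n < x then m else 0) ` A) = 0"
      using False by (auto intro!: antisym Sup_least)
    ultimately show ?thesis using leD by (metis (no_types, lifting))
  qed
qed

lemma galois: assumes "time_warp f"
  shows "f m \<le> enat n \<longleftrightarrow> m \<le> tw_star f (enat (Suc n))"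
proof
  assume fm: "f m \<le> enat n"
  let ?h = "\<lambda>x. if enat n < x then m else 0"
  have "\<forall>x. f (?h x) \<le> pred_tw x"
    using fm pred_low tw_zero[OF assms] by (auto intro: order.trans)
  from star_max[OF assms step_tw this, of "enat (Suc n)"] show "m \<le> tw_star f (enat (Suc n))" by simp
next
  assume "m \<le> tw_star f (enat (Suc n))"
  hence "f m \<le> f (tw_star f (enat (Suc n)))" by (rule tw_mono[OF assms])
  also have "\<dots> \<le> enat n" using star_le[OF assms, of "enat (Suc n)"] by (simp add: pred_Suc)
  finally show "f m \<le> enat n" .
qed

lemma star_0: assumes "time_warp f" shows "tw_star f 0 = 0"
  by (rule tw_zero[OF star_tw[OF assms]])

lemma enat_all_le: "(\<And>k. enat k \<le> x) \<Longrightarrow> x = \<infinity>"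
proof (cases x)
  case (enat n) assume h: "\<And>k. enat k \<le> x"
  from h[of "Suc n"] enat show ?thesis by simp
qed simp

lemma star_inf1: assumes tw: "time_warp f" and fb: "f (enat b) < \<infinity>" and fS: "f (enat (Suc b)) = \<infinity>"
  shows "tw_star f \<infinity> = enat b"
proof -
  have stw: "time_warp (tw_star f)" by (rule star_tw[OF tw])
  have up: "tw_star f (enat k) \<le> enat b" for k
  proof (cases k)
    case 0 thus ?thesis using star_0[OF tw] by (simp add: zero_enat_def[symmetric])
  next
    case (Suc n)
    let ?m = "tw_star f (enat k)"
    have fm: "f ?m \<le> enat n" using galois[OF tw, of ?m n] Suc by simp
    show ?thesis
    proof (rule ccontr)
      assume "\<not> ?m \<le> enat b"
      hence "enat (Suc b) \<le> ?m" by (cases ?m) auto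
      hence "f (enat (Suc b)) \<le> f ?m" by (rule tw_mono[OF tw])
      with fm fS show False by simp
    qed
  qed
  have "tw_star f \<infinity> = (SUP k. tw_star f (enat k))" by (rule tw_inf[OF stw])
  also have "\<dots> \<le> enat b" using up by (auto intro: SUP_least)
  finally have le: "tw_star f \<infinity> \<le> enat b" .
  obtain j where j: "f (enat b) = enat j" using fb by (cases "f (enat b)") auto
  hence "enat b \<le> tw_star f (enat (Suc j))" using galois[OF tw, of "enat b" j] by simp
  also have "\<dots> \<le> tw_star f \<infinity>" by (rule tw_mono[OF stw]) simp
  finally show ?thesis using le by simp
qed

lemma star_inf2: assumes tw: "time_warp f" and fin: "\<And>k. f (enat k) < \<infinity>"
  shows "tw_star f \<infinity> = \<infinity>"
proof (rule enat_all_le)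
  fix k
  obtain j where j: "f (enat k) = enat j" using fin[of k] by (cases "f (enat k)") auto
  hence "enat k \<le> tw_star f (enat (Suc j))" using galois[OF tw, of "enat k" j] by simp
  also have "\<dots> \<le> tw_star f \<infinity>" by (rule tw_mono[OF star_tw[OF tw]]) simp
  finally show "enat k \<le> tw_star f \<infinity>" .
qed

lemma last_fin: assumes tw: "time_warp f" and l: "tw_last f = \<infinity>"
  shows "f (enat k) < \<infinity>" "f \<infinity> = \<infinity>"
proof -
  have ne: "f (enat k) \<noteq> f \<infinity>" for k
  proof
    assume "f (enat k) = f \<infinity>"
    hence "tw_last f \<le> enat k" unfolding tw_last_def by (rule Least_le)
    with l show False by simp
  qed
  have lt: "f (enat k) < f \<infinity>" for k
  proof -
    have "f (enat k) \<le> f \<infinity>" by (rule tw_mono[OF tw]) simp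
    thus ?thesis using ne[of k] by (rule le_neq_trans)
  qed
  show "f (enat k) < \<infinity>"
  proof -
    have "f \<infinity> \<le> \<infinity>" by simp
    with lt[of k] show ?thesis by (rule less_le_trans)
  qed
  show "f \<infinity> = \<infinity>"
  proof (rule ccontr)
    assume "f \<infinity> \<noteq> \<infinity>"
    then obtain K where K: "f \<infinity> = enat K" by (cases "f \<infinity>") auto
    have b: "f (enat k) \<le> enat (K - 1)" for k
    proof -
      have "f (enat k) < enat K" using lt[of k] K by simp
      then obtain i where i: "f (enat k) = enat i" using enat_iless by blast
      with \<open>f (enat k) < enat K\<close> have "i < K" by simp
      hence "i \<le> K - 1" by linarith
      thus ?thesis using i by simp
    qed
    have "(SUP k. f (enat k)) \<le> enat (K - 1)" using b by (rule SUP_least)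
    hence "f \<infinity> \<le> enat (K - 1)" using tw_inf[OF tw] by simp
    moreover have "f (enat 0) < enat K" using lt[of 0] K by simp
    hence "K > 0" using not_less_zero by (metis enat_0_iff(1) gr_zeroI not_less_zero zero_enat_def)
    ultimately show False using K by simp
  qed
qed

lemma star_last: assumes tw: "time_warp f" and l: "tw_last f = \<infinity>"
  shows "tw_last (tw_star f) = \<infinity>"
proof -
  have si: "tw_star f \<infinity> = \<infinity>" using star_inf2[OF tw last_fin(1)[OF tw l]] .
  have fin: "tw_star f (enat k) \<noteq> \<infinity>" for k
  proof (cases k)
    case 0 thus ?thesis using star_0[OF tw] by (simp add: zero_enat_def[symmetric])
  next
    case (Suc n)
    show ?thesis
    proof
      assume "tw_star f (enat k) = \<infinity>"
      hence "\<infinity> \<le> tw_star f (enat (Suc n))" using Suc by simp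
      hence "f \<infinity> \<le> enat n" using galois[OF tw, of \<infinity> n] by blast
      thus False using last_fin(2)[OF tw l] by simp
    qed
  qed
  show ?thesis unfolding tw_last_def
  proof (rule Least_equality)
    show "tw_star f \<infinity> = tw_star f \<infinity>" ..
    fix y assume y: "tw_star f y = tw_star f \<infinity>"
    show "\<infinity> \<le> y"
    proof (cases y)
      case (enat k) thus ?thesis using fin[of k] y si by simp
    qed simp
  qed
qed



theorem lemma3p6:
  fixes D :: "('v, 'k) sample set" and d :: "('v, 'k) sample \<Rightarrow> enat"
    and t :: "'v bterm" and f :: "enat \<Rightarrow> enat"
  assumes "finite D" and "saturated D" and "diagram D d"
    and "time_warp f"
    and "strongly_extends D d t f"
  shows "strongly_extends D d (BStar t) (tw_star f)"
proof -
  note tw = assms(4)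
  have ext: "\<And>a. App t a \<in> D \<Longrightarrow> f (d a) = d (App t a)"
    using assms(5) unfolding strongly_extends_def extends_tw_def Dt_def by fastforce
  have strong: "Dt D d t \<noteq> {} \<Longrightarrow> d (SLast t) = \<infinity> \<Longrightarrow> tw_last f = \<infinity>"
    using assms(5) unfolding strongly_extends_def by blast
  have sat: "\<And>a b. a \<in> D \<Longrightarrow> leadsto a b \<Longrightarrow> b \<in> D"
    using assms(2) unfolding saturated_def by blast
  note dg = assms(3)[unfolded diagram_def]
  have D2: "\<And>t a. a \<in> D \<Longrightarrow> App t a \<in> D \<Longrightarrow> d a = 0 \<Longrightarrow> d (App t a) = 0"
    using dg[THEN conjunct2, THEN conjunct1] by blast
  have D3: "\<And>a. a \<in> D \<Longrightarrow> SSuc a \<in> D \<Longrightarrow> d (SSuc a) = eSuc (d a)"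
    using dg[THEN conjunct2, THEN conjunct2, THEN conjunct1] by blast
  have D4: "\<And>t a. App t a \<in> D \<Longrightarrow> (d (SLast t) \<le> d a \<longleftrightarrow> d (App t (SLast t)) = d (App t a))"
    using dg[THEN conjunct2, THEN conjunct2, THEN conjunct2, THEN conjunct1] by blast
  have D5: "\<And>t. SLast t \<in> D \<Longrightarrow> App t (SLast t) \<in> D \<Longrightarrow> d (SLast t) = \<infinity> \<Longrightarrow> d (App t (SLast t)) = \<infinity>"
    using dg[THEN conjunct2, THEN conjunct2, THEN conjunct2, THEN conjunct2, THEN conjunct1] by blast
  have D10: "\<And>t a. App (BStar t) a \<in> D \<Longrightarrow> 0 < d a \<Longrightarrow> d a < \<infinity> \<Longrightarrow> d (App t (App (BStar t) a)) < d a"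
    using dg[THEN conjunct2, THEN conjunct2, THEN conjunct2, THEN conjunct2, THEN conjunct2, THEN conjunct2, THEN conjunct2, THEN conjunct2, THEN conjunct2, THEN conjunct1] by blast
  have D11: "\<And>t a. App (BStar t) a \<in> D \<Longrightarrow> d (App (BStar t) a) < \<infinity> \<Longrightarrow> d a \<le> d (App t (SSuc (App (BStar t) a)))"
    using dg[THEN conjunct2, THEN conjunct2, THEN conjunct2, THEN conjunct2, THEN conjunct2, THEN conjunct2, THEN conjunct2, THEN conjunct2, THEN conjunct2, THEN conjunct2, THEN conjunct1] by blast
  have D12: "\<And>t. SLast (BStar t) \<in> D \<Longrightarrow> SLast t \<in> D \<Longrightarrow> d (SLast (BStar t)) = \<infinity> \<Longrightarrow> d (SLast t) = \<infinity>"
    using dg[THEN conjunct2, THEN conjunct2, THEN conjunct2, THEN conjunct2, THEN conjunct2, THEN conjunct2, THEN conjunct2, THEN conjunct2, THEN conjunct2, THEN conjunct2, THEN conjunct2] by blast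

  have mem: "a \<in> D \<and> App t (App (BStar t) a) \<in> D \<and> SSuc (App (BStar t) a) \<in> D
     \<and> App t (SSuc (App (BStar t) a)) \<in> D \<and> App (BStar t) (SLast (BStar t)) \<in> D
     \<and> SLast (BStar t) \<in> D \<and> App t (SLast t) \<in> D \<and> SLast t \<in> D
     \<and> App t (App (BStar t) (SLast (BStar t))) \<in> D"
    if A: "App (BStar t) a \<in> D" for a
  proof -
    have 1: "a \<in> D" using sat[OF A l1] .
    have 2: "App t (App (BStar t) a) \<in> D" using sat[OF A l5] .
    have 4: "App t (SSuc (App (BStar t) a)) \<in> D" using sat[OF A l6] .
    have 3: "SSuc (App (BStar t) a) \<in> D" using sat[OF 4 l1] .
    have 5: "App (BStar t) (SLast (BStar t)) \<in> D" using sat[OF A l3] .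
    have 6: "SLast (BStar t) \<in> D" using sat[OF 5 l1] .
    have 7: "App t (SLast t) \<in> D" using sat[OF 2 l3] .
    have 8: "SLast t \<in> D" using sat[OF 7 l1] .
    have 9: "App t (App (BStar t) (SLast (BStar t))) \<in> D" using sat[OF 5 l5] .
    show ?thesis using 1 2 3 4 5 6 7 8 9 by blast
  qed

  have part1: "tw_star f (d a) = d (App (BStar t) a)" if A: "App (BStar t) a \<in> D" for a
  proof -
    note m = mem[OF A]
    define b where "b = d (App (BStar t) a)"
    have fb: "f b = d (App t (App (BStar t) a))" unfolding b_def using ext m by blast
    have fSb: "f (eSuc b) = d (App t (SSuc (App (BStar t) a)))"
      unfolding b_def using ext[of "SSuc (App (BStar t) a)"] D3[OF A] m by simp
    show ?thesis
    proof (cases "d a")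
      case (enat na)
      show ?thesis
      proof (cases na)
        case 0
        hence "d a = 0" using enat by (simp add: zero_enat_def)
        moreover have "d (App (BStar t) a) = 0" using D2 A m \<open>d a = 0\<close> by blast
        ultimately show ?thesis using star_0[OF tw] by simp
      next
        case (Suc n)
        have "f b < enat (Suc n)" using D10[OF A] enat Suc fb by (simp add: zero_enat_def)
        then obtain i where i: "f b = enat i" using enat_iless by blast
        with \<open>f b < enat (Suc n)\<close> have "f b \<le> enat n" by simp
        hence le: "b \<le> tw_star f (enat (Suc n))" using galois[OF tw] by blast
        show ?thesis
        proof (cases b)
          case (enat k)
          have "enat (Suc n) \<le> f (enat (Suc k))"
            using D11[OF A] fSb enat \<open>d a = enat na\<close> Suc unfolding b_def
            by (simp add: eSuc_enat)
          hence "\<not> enat (Suc k) \<le> tw_star f (enat (Suc n))"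
            using galois[OF tw, of "enat (Suc k)" n] by (metis Suc_n_not_le_n enat_ord_simps(1) order.trans)
          hence "tw_star f (enat (Suc n)) \<le> b" using enat by (cases "tw_star f (enat (Suc n))") auto
          thus ?thesis using le \<open>d a = enat na\<close> Suc unfolding b_def by simp
        next
          case infinity
          thus ?thesis using le \<open>d a = enat na\<close> Suc unfolding b_def by simp
        qed
      qed
    next
      case infinity
      define L where "L = d (SLast (BStar t))"
      have cb: "d (App (BStar t) (SLast (BStar t))) = b"
        using D4[OF A] infinity unfolding b_def by simp
      have goal: "tw_star f \<infinity> = b"
      proof (cases L)
        case infinity
        have "b = \<infinity>" using D5[of "BStar t"] m cb infinity unfolding L_def by simp
        have "d (SLast t) = \<infinity>" using D12[of t] m infinity unfolding L_def by simp
        moreover have "Dt D d t \<noteq> {}" using m unfolding Dt_def by blast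
        ultimately have "tw_last f = \<infinity>" using strong by blast
        thus ?thesis using star_inf2[OF tw last_fin(1)[OF tw]] \<open>b = \<infinity>\<close> by simp
      next
        case (enat nL)
        show ?thesis
        proof (cases nL)
          case 0
          have "b = 0" using D2[of "SLast (BStar t)" "BStar t"] m cb enat 0 unfolding L_def
            by (simp add: zero_enat_def)
          have "\<infinity> \<le> f (eSuc b)" using D11[OF A] fSb infinity unfolding b_def
            using \<open>b = 0\<close> b_def by (simp add: zero_enat_def)
          hence "f (enat (Suc 0)) = \<infinity>" using \<open>b = 0\<close> by (simp add: eSuc_enat zero_enat_def)
          moreover have "f (enat 0) < \<infinity>" using tw_zero[OF tw] by (simp add: zero_enat_def[symmetric])
          ultimately have "tw_star f \<infinity> = enat 0" using star_inf1[OF tw] by blast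
          thus ?thesis using \<open>b = 0\<close> by (simp add: zero_enat_def)
        next
          case (Suc n)
          have "d (App t (App (BStar t) (SLast (BStar t)))) < L"
            using D10[of t "SLast (BStar t)"] m enat Suc unfolding L_def by (simp add: zero_enat_def)
          moreover have "f b = d (App t (App (BStar t) (SLast (BStar t))))"
            using ext[of "App (BStar t) (SLast (BStar t))"] m cb by simp
          ultimately have "f b < L" by simp
          moreover have "L < \<infinity>" using enat by simp
          ultimately have "f b < \<infinity>" by (rule less_trans)
          show ?thesis
          proof (cases b)
            case (enat k)
            have "\<infinity> \<le> f (eSuc b)" using D11[OF A] fSb infinity enat unfolding b_def by simp
            hence "f (enat (Suc k)) = \<infinity>" using enat by (simp add: eSuc_enat)
            thus ?thesis using star_inf1[OF tw] \<open>f b < \<infinity>\<close> enat by simp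
          next
            case infinity
            have "f (enat k) < \<infinity>" for k
            proof -
              have "f (enat k) \<le> f \<infinity>" by (rule tw_mono[OF tw]) simp
              moreover have "f \<infinity> < \<infinity>" using \<open>f b < \<infinity>\<close> infinity by simp
              ultimately show ?thesis by (rule le_less_trans)
            qed
            thus ?thesis using star_inf2[OF tw] infinity by simp
          qed
        qed
      qed
      thus ?thesis using infinity unfolding b_def by simp
    qed
  qed

  have part2: "tw_last (tw_star f) = \<infinity>"
    if ne: "Dt D d (BStar t) \<noteq> {}" and inf: "d (SLast (BStar t)) = \<infinity>"
  proof -
    obtain a where A: "App (BStar t) a \<in> D" using ne unfolding Dt_def by blast
    note m = mem[OF A]
    have "d (SLast t) = \<infinity>" using D12[of t] m inf by simp
    moreover have "Dt D d t \<noteq> {}" using m unfolding Dt_def by blast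
    ultimately have "tw_last f = \<infinity>" using strong by blast
    thus ?thesis using star_last[OF tw] by simp
  qed

  show ?thesis unfolding strongly_extends_def extends_tw_def
  proof
    show "\<forall>(i, j)\<in>Dt D d (BStar t). tw_star f i = j"
      unfolding Dt_def using part1 by blast
  qed (use part2 in blast)
qed

end
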